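(* Let $n\ge 2$, $d_1,\ldots,d_n\in\mathbb{N}$, and let $d$ be a dependence measure, i.e. a map assigning a real number $d(X_1,\ldots,X_n)$ to random vectors $X_i=(X_{i,1},\ldots,X_{i,d_i})$ with values in $\mathbb{R}^{d_i}$, where $d(X_1,\ldots,X_n)$ depends only on the joint distribution of $(X_1,\ldots,X_n)$. Assume $d$ is translation invariant (i.e. $d(X_1+a_1,\ldots,X_n+a_n)=d(X_1,\ldots,X_n)$ for all constant vectors $a_i\in\mathbb{R}^{d_i}$) and symmetric in each element (i.e. the value of $d$ does not change if any single element $X_{i,k}$ is replaced by $-X_{i,k}$). Define $$d_{cop}(X_1,\ldots,X_n) := d\big(T_{X_1}(X_1,U_1),\ldots,T_{X_n}(X_n,U_n)\big),$$ where $T_{X_i}(X_i,U_i) := \big(T_{X_{i,1}}(X_{i,1},U_{i,1}),\ldots,T_{X_{i,d_i}}(X_{i,d_i},U_{i,d_i})\big)$, for a real random variable $Y$ we set $T_Y(y,u):=\mathbb{P}(Y<y)+u\,\mathbb{P}(Y=y)$, and the $U_{i,k}$ ($i=1,\ldots,n$, $k=1,\ldots,d_i$) are independent random variables uniformly distributed on $[0,1]$, independent of $(X_1,\ldots,X_n)$. Then for all strictly monotone (each either strictly increasing or strictly decreasing) functions $g_{i,k}:\mathbb{R}\to\mathbb{R}$, $i=1,\ldots,n$, $k=1,\ldots,d_i$, $$d_{cop}(X_1,\ldots,X_n) = d_{cop}\big(g_1(X_1),\ldots,g_n(X_n)\big),$$ where $g_i(X_i):=(g_{i,1}(X_{i,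1}),\ldots,g_{i,d_i}(X_{i,d_i}))$.
   Context: The random variable $T_Y(Y,U)$ with $U$ uniform on $[0,1]$ independent of $Y$ is called the distributional transform of $Y$; for a random vector it is taken element-wise with independent uniform variables for each element. The "elements" of the random vector $X_i$ are its univariate coordinates $X_{i,k}$. *)

theory Defs
  imports "HOL-Probability.Probability"
begin

text \<open>Index set of all elements X_{i,k}, i < n, k < d_i (0-based indices).\<close>
definition idx :: "nat \<Rightarrow> (nat \<Rightarrow> nat) \<Rightarrow> (nat \<times> nat) set" where
  "idx n ds = {(i, k). i < n \<and> k < ds i}"

text \<open>Joint distributions of (X_1,...,X_n) are probability measures on the product space
  indexed by the elements; a dependence measure is a real-valued map on such laws.\<close>
abbreviation joint_space :: "(nat \<times> nat) set \<Rightarrow> ((nat \<times> nat) \<Rightarrow> real) measure" where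
  "joint_space I \<equiv> PiM I (\<lambda>_. borel)"

definition is_joint_law :: "(nat \<times> nat) set \<Rightarrow> ((nat \<times> nat) \<Rightarrow> real) measure \<Rightarrow> bool" where
  "is_joint_law I P \<longleftrightarrow> prob_space P \<and> sets P = sets (joint_space I)"

definition translation_invariant ::
  "(((nat \<times> nat) \<Rightarrow> real) measure \<Rightarrow> real) \<Rightarrow> (nat \<times> nat) set \<Rightarrow> bool" where
  "translation_invariant d I \<longleftrightarrow>
     (\<forall>P a. is_joint_law I P \<longrightarrow>
        d (distr P (joint_space I) (\<lambda>x. \<lambda>j\<in>I. x j + a j)) = d P)"

definition elementwise_symmetric ::
  "(((nat \<times> nat) \<Rightarrow> real) measure \<Rightarrow> real) \<Rightarrow> (nat \<times> nat) set \<Rightarrow> bool" where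
  "elementwise_symmetric d I \<longleftrightarrow>
     (\<forall>P j. is_joint_law I P \<longrightarrow> j \<in> I \<longrightarrow>
        d (distr P (joint_space I) (\<lambda>x. \<lambda>j'\<in>I. if j' = j then - x j' else x j')) = d P)"

text \<open>Distributional transform T_Y(y,u) = P(Y < y) + u P(Y = y), where mu is the law of Y.\<close>
definition distr_transform :: "real measure \<Rightarrow> real \<Rightarrow> real \<Rightarrow> real" where
  "distr_transform mu y u = measure mu {..<y} + u * measure mu {y}"

definition indep_uniforms ::
  "'a measure \<Rightarrow> (nat \<times> nat) set \<Rightarrow> ((nat \<times> nat) \<Rightarrow> 'a \<Rightarrow> real) \<Rightarrow> ((nat \<times> nat) \<Rightarrow> 'a \<Rightarrow> real) \<Rightarrow> bool" where
  "indep_uniforms M I X U \<longleftrightarrow>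
     (\<forall>j\<in>I. U j \<in> borel_measurable M \<and> distr M borel (U j) = uniform_measure lborel {0..1}) \<and>
     prob_space.indep_vars M (\<lambda>_. borel) U I \<and>
     prob_space.indep_var M (joint_space I) (\<lambda>\<omega>. \<lambda>j\<in>I. X j \<omega>) (joint_space I) (\<lambda>\<omega>. \<lambda>j\<in>I. U j \<omega>)"

definition dcop ::
  "(((nat \<times> nat) \<Rightarrow> real) measure \<Rightarrow> real) \<Rightarrow> 'a measure \<Rightarrow> (nat \<times> nat) set \<Rightarrow>
   ((nat \<times> nat) \<Rightarrow> 'a \<Rightarrow> real) \<Rightarrow> ((nat \<times> nat) \<Rightarrow> 'a \<Rightarrow> real) \<Rightarrow> real" where
  "dcop d M I X U =
     d (distr M (joint_space I)
          (\<lambda>\<omega>. \<lambda>j\<in>I. distr_transform (distr M borel (X j)) (X j \<omega>) (U j \<omega>)))"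

end

theory Submission imports Defs begin

lemma uniform_flip:
  "distr (uniform_measure lborel {0..1::real}) borel (\<lambda>x. 1 - x) = uniform_measure lborel {0..1}"
proof -
  have L: "lborel = distr lborel borel (\<lambda>x::real. 1 + (-1) * x)"
    using lborel_real_affine[of "-1" 1] by (simp add: density_1)
  have E: "emeasure lborel ((\<lambda>x::real. 1 - x) -` B) = emeasure lborel B" if "B \<in> sets borel" for B
  proof -
    have "emeasure lborel B = emeasure (distr lborel borel (\<lambda>x::real. 1 + (-1) * x)) B"
      using L by simp
    also have "\<dots> = emeasure lborel ((\<lambda>x::real. 1 + (-1) * x) -` B)"
      using that by (subst emeasure_distr) auto
    finally show ?thesis by simp
  qed
  show ?thesis
  proof (rule measure_eqI)
    fix A :: "real set" assume A: "A \<in> sets (distr (uniform_measure lborel {0..1}) borel (\<lambda>x. 1 - x))"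
    then have Ab: "A \<in> sets borel" by simp
    have pA: "(\<lambda>x::real. 1 - x) -` A \<in> sets borel"
      using measurable_sets[of "\<lambda>x::real. 1-x" borel borel A] Ab by simp
    have pre: "{0..1} \<inter> (\<lambda>x::real. 1 - x) -` A = (\<lambda>x::real. 1 - x) -` ({0..1} \<inter> A)"
      by auto
    have "emeasure (distr (uniform_measure lborel {0..1}) borel (\<lambda>x. 1 - x)) A
        = emeasure (uniform_measure lborel {0..1}) ((\<lambda>x::real. 1 - x) -` A)"
      using Ab by (subst emeasure_distr) auto
    also have "\<dots> = emeasure lborel ({0..1} \<inter> (\<lambda>x::real. 1 - x) -` A) / emeasure lborel {0..1::real}"
      using Ab pA by (subst emeasure_uniform_measure) auto
    also have "\<dots> = emeasure lborel ({0..1} \<inter> A) / emeasure lborel {0..1::real}"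
    proof -
      have "(\<lambda>x::real. 1 - x) -` ({0..1} \<inter> A) \<in> sets borel"
        using measurable_sets[of "\<lambda>x::real. 1-x" borel borel "{0..1} \<inter> A"] Ab by simp
      then show ?thesis unfolding pre using Ab E[of "{0..1} \<inter> A"] by auto
    qed
    also have "\<dots> = emeasure (uniform_measure lborel {0..1}) A"
      using Ab by simp
    finally show "emeasure (distr (uniform_measure lborel {0..1}) borel (\<lambda>x. 1 - x)) A = emeasure (uniform_measure lborel {0..1}) A" .
  qed simp
qed

lemma dt_measurable:
  assumes "finite_measure mu" "sets mu = sets borel"
    and f: "f \<in> borel_measurable N" and h: "h \<in> borel_measurable N"
  shows "(\<lambda>x. distr_transform mu (f x) (h x)) \<in> borel_measurable N"
proof -
  interpret finite_measure mu by fact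
  have m1: "(\<lambda>y. measure mu {..<y}) \<in> borel_measurable borel"
    by (rule borel_measurable_mono) (auto simp: mono_def assms(2) intro!: finite_measure_mono)
  have m2: "(\<lambda>y. measure mu {..y}) \<in> borel_measurable borel"
    by (rule borel_measurable_mono) (auto simp: mono_def assms(2) intro!: finite_measure_mono)
  have eq: "measure mu {y} = measure mu {..y} - measure mu {..<y}" for y :: real
  proof -
    have "{y} = {..y} - {..<y}" by auto
    then show ?thesis using assms(2) by (simp only:) (subst finite_measure_Diff, auto)
  qed
  have m3: "(\<lambda>y. measure mu {y}) \<in> borel_measurable borel"
    unfolding eq using m1 m2 by measurable
  show ?thesis unfolding distr_transform_def
    using measurable_compose[OF f m1] measurable_compose[OF f m3] h by measurable
qed

lemma dt_inc:
  assumes "prob_space M" "X \<in> borel_measurable M" "g \<in> borel_measurable borel"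
    and inc: "\<forall>x y. x < y \<longrightarrow> g x < (g y :: real)"
  shows "distr_transform (distr M borel (\<lambda>\<omega>. g (X \<omega>))) (g y) u = distr_transform (distr M borel X) y u"
proof -
  have gX: "(\<lambda>\<omega>. g (X \<omega>)) \<in> borel_measurable M" using assms by measurable
  have a: "(\<lambda>\<omega>. g (X \<omega>)) -` {..<g y} \<inter> space M = X -` {..<y} \<inter> space M"
    using inc by auto (metis linorder_neqE_linordered_idom not_less_iff_gr_or_eq order.asym)
  have b: "(\<lambda>\<omega>. g (X \<omega>)) -` {g y} \<inter> space M = X -` {y} \<inter> space M"
    using inc by auto (metis linorder_neqE_linordered_idom order.irrefl)
  show ?thesis unfolding distr_transform_def
    using gX assms(2) by (simp add: measure_distr a b)
qed

lemma dt_dec: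
  assumes "prob_space M" "X \<in> borel_measurable M" "g \<in> borel_measurable borel"
    and dec: "\<forall>x y. x < y \<longrightarrow> g x > (g y :: real)"
  shows "distr_transform (distr M borel (\<lambda>\<omega>. g (X \<omega>))) (g y) u = 1 - distr_transform (distr M borel X) y (1 - u)"
proof -
  interpret prob_space M by fact
  have gX: "(\<lambda>\<omega>. g (X \<omega>)) \<in> borel_measurable M" using assms by measurable
  have a: "(\<lambda>\<omega>. g (X \<omega>)) -` {..<g y} \<inter> space M = X -` {y<..} \<inter> space M"
    using dec by auto (metis linorder_neqE_linordered_idom not_less_iff_gr_or_eq order.asym)
  have b: "(\<lambda>\<omega>. g (X \<omega>)) -` {g y} \<inter> space M = X -` {y} \<inter> space M"
    using dec by auto (metis linorder_neqE_linordered_idom order.irrefl)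
  have "prob (X -` {y<..} \<inter> space M) + prob (X -` {..<y} \<inter> space M) + prob (X -` {y} \<inter> space M) = 1"
  proof -
    have u: "space M = (X -` {y<..} \<inter> space M) \<union> (X -` {..<y} \<inter> space M) \<union> (X -` {y} \<inter> space M)"
      by auto
    have "prob (space M) = prob ((X -` {y<..} \<inter> space M) \<union> (X -` {..<y} \<inter> space M)) + prob (X -` {y} \<inter> space M)"
      by (subst u, rule finite_measure_Union) (use assms(2) in \<open>auto\<close>)
    also have "prob ((X -` {y<..} \<inter> space M) \<union> (X -` {..<y} \<inter> space M)) = prob (X -` {y<..} \<inter> space M) + prob (X -` {..<y} \<inter> space M)"
      by (rule finite_measure_Union) (use assms(2) in \<open>auto\<close>)
    finally show ?thesis by (simp add: prob_space)
  qed
  then show ?thesis unfolding distr_transform_def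
    using gX assms(2) by (simp add: measure_distr a b algebra_simps)
qed

lemma flip_meas: "(\<lambda>x. \<lambda>j\<in>I. if j \<in> S then - x j else (x j::real)) \<in> measurable (joint_space I) (joint_space I)"
  by measurable

lemma flip_inv:
  assumes "finite S" "S \<subseteq> I" "elementwise_symmetric d I" "is_joint_law I P"
  shows "d (distr P (joint_space I) (\<lambda>x. \<lambda>j\<in>I. if j \<in> S then - x j else x j)) = d P"
  using assms(1,2)
proof (induction S rule: finite_induct)
  case empty
  have "distr P (joint_space I) (\<lambda>x. \<lambda>j\<in>I. if j \<in> {} then - x j else x j) = distr P (joint_space I) (\<lambda>x. x)"
  proof (rule distr_cong)
    fix x assume "x \<in> space P"
    then have "x \<in> space (joint_space I)" using assms(4) unfolding is_joint_law_def
      using sets_eq_imp_space_eq by blast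
    then show "(\<lambda>j\<in>I. if j \<in> {} then - x j else x j) = x"
      by (auto simp: space_PiM PiE_def extensional_def)
  qed auto
  also have "\<dots> = P" using assms(4) unfolding is_joint_law_def by (intro distr_id2) auto
  finally show ?case by (rule arg_cong[where f=d])
next
  case (insert s S)
  have sp: "space P = space (joint_space I)" using assms(4) unfolding is_joint_law_def
      using sets_eq_imp_space_eq by blast
  have setsP: "sets P = sets (joint_space I)" using assms(4) unfolding is_joint_law_def by auto
  let ?F = "\<lambda>x. \<lambda>j\<in>I. if j \<in> S then - x j else (x j::real)"
  have mF: "?F \<in> measurable P (joint_space I)"
    unfolding measurable_cong_sets[OF setsP refl] by (rule flip_meas)
  let ?G = "\<lambda>x. \<lambda>j'\<in>I. if j' = s then - x j' else (x j'::real)"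
  have "distr P (joint_space I) (\<lambda>x. \<lambda>j\<in>I. if j \<in> insert s S then - x j else x j) = distr P (joint_space I) (?G \<circ> ?F)"
  proof (rule distr_cong)
    fix x assume "x \<in> space P"
    show "(\<lambda>j\<in>I. if j \<in> insert s S then - x j else x j) = (?G \<circ> ?F) x"
      using insert(2) by (auto simp: fun_eq_iff)
  qed auto
  also have "\<dots> = distr (distr P (joint_space I) ?F) (joint_space I) ?G"
    by (rule distr_distr[symmetric]) (use flip_meas mF in auto)
  also have "d \<dots> = d (distr P (joint_space I) ?F)"
  proof -
    have "is_joint_law I (distr P (joint_space I) ?F)"
      unfolding is_joint_law_def
      using assms(4) mF unfolding is_joint_law_def
      by (auto intro: prob_space.prob_space_distr)
    then show ?thesis using assms(3) insert(4) unfolding elementwise_symmetric_def by blast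
  qed
  also have "\<dots> = d P" using insert(3,4) by (simp add: restrict_def)
  finally show ?case .
qed

lemma main_aux:
  fixes I :: "(nat \<times> nat) set"
    and d :: "((nat \<times> nat) \<Rightarrow> real) measure \<Rightarrow> real"
    and M :: "'a measure"
    and X U V :: "(nat \<times> nat) \<Rightarrow> 'a \<Rightarrow> real"
    and g :: "(nat \<times> nat) \<Rightarrow> real \<Rightarrow> real"
  assumes finI: "finite I" and ne: "I \<noteq> {}"
    and TI: "translation_invariant d I"
    and ES: "elementwise_symmetric d I"
    and PS: "prob_space M"
    and Xm: "\<forall>j\<in>I. X j \<in> borel_measurable M"
    and IU: "indep_uniforms M I X U"
    and IV: "indep_uniforms M I (\<lambda>j \<omega>. g j (X j \<omega>)) V"
    and gmono: "\<forall>j\<in>I. (\<forall>x y. x < y \<longrightarrow> g j x < g j y) \<or> (\<forall>x y. x < y \<longrightarrow> g j x > g j y)"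
  shows "dcop d M I X U = dcop d M I (\<lambda>j \<omega>. g j (X j \<omega>)) V"
proof -
  interpret prob_space M by fact
  define S where "S = {j\<in>I. \<not>(\<forall>x y. x < y \<longrightarrow> g j x < g j y)}"
  have SI: "S \<subseteq> I" and finS: "finite S" using finI by (auto simp: S_def intro: finite_subset)
  have S_dec: "\<forall>x y. x < y \<longrightarrow> g j x > g j y" if "j \<in> S" for j
    using that gmono by (auto simp: S_def)
  have S_inc: "\<forall>x y. x < y \<longrightarrow> g j x < g j y" if "j \<in> I" "j \<notin> S" for j
    using that by (auto simp: S_def)
  have gm: "g j \<in> borel_measurable borel" if "j \<in> I" for j
  proof (cases "j \<in> S")
    case True
    have "mono (\<lambda>x. - g j x)" using S_dec[OF True]
      by (auto simp: mono_def) (metis order.order_iff_strict less_imp_le)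
    then have "(\<lambda>x. - g j x) \<in> borel_measurable borel" by (rule borel_measurable_mono)
    then have "(\<lambda>x. - (- g j x)) \<in> borel_measurable borel" by measurable
    then show ?thesis by simp
  next
    case False
    have "mono (g j)" using S_inc[OF that False]
      by (auto simp: mono_def) (metis order.order_iff_strict less_imp_le)
    then show ?thesis by (rule borel_measurable_mono)
  qed
  have Xm': "X j \<in> borel_measurable M" if "j \<in> I" for j using Xm that by auto
  have Um: "U j \<in> borel_measurable M" and Ud: "distr M borel (U j) = uniform_measure lborel {0..1}"
    if "j \<in> I" for j using IU that unfolding indep_uniforms_def by auto
  have Vm: "V j \<in> borel_measurable M" and Vd: "distr M borel (V j) = uniform_measure lborel {0..1}"
    if "j \<in> I" for j using IV that unfolding indep_uniforms_def by auto
  have indU: "indep_vars (\<lambda>_. borel) U I" and indXU: "indep_var (joint_space I) (\<lambda>\<omega>. \<lambda>j\<in>I. X j \<omega>) (joint_space I) (\<lambda>\<omega>. \<lambda>j\<in>I. U j \<omega>)"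
    using IU unfolding indep_uniforms_def by auto
  have indV: "indep_vars (\<lambda>_. borel) V I" and indGV: "indep_var (joint_space I) (\<lambda>\<omega>. \<lambda>j\<in>I. g j (X j \<omega>)) (joint_space I) (\<lambda>\<omega>. \<lambda>j\<in>I. V j \<omega>)"
    using IV unfolding indep_uniforms_def by auto
  define P where "P = joint_space I"
  define Q where "Q = PiM I (\<lambda>_. uniform_measure lborel {0..1::real})"
  have setsQ: "sets Q = sets P" unfolding Q_def P_def by (intro sets_PiM_cong) auto
  define Xv where "Xv = (\<lambda>\<omega>. \<lambda>j\<in>I. X j \<omega>)"
  define Uv where "Uv = (\<lambda>\<omega>. \<lambda>j\<in>I. U j \<omega>)"
  define Vv where "Vv = (\<lambda>\<omega>. \<lambda>j\<in>I. V j \<omega>)"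
  define GXv where "GXv = (\<lambda>\<omega>. \<lambda>j\<in>I. g j (X j \<omega>))"
  have mXv: "Xv \<in> measurable M P" unfolding Xv_def P_def
    by (rule measurable_restrict) (use Xm' in auto)
  have mUv: "Uv \<in> measurable M P" unfolding Uv_def P_def
    by (rule measurable_restrict) (use Um in auto)
  have mVv: "Vv \<in> measurable M P" unfolding Vv_def P_def
    by (rule measurable_restrict) (use Vm in auto)
  have mGXv: "GXv \<in> measurable M P" unfolding GXv_def P_def
    by (rule measurable_restrict) (use Xm' gm in auto)
  have dU: "distr M P Uv = Q"
  proof -
    have "distr M P Uv = PiM I (\<lambda>i. distr M borel (U i))"
      unfolding P_def Uv_def using indep_vars_iff_distr_eq_PiM'[OF ne, where M'="\<lambda>_. borel" and X=U] indU Um by auto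
    also have "\<dots> = Q" unfolding Q_def by (rule PiM_cong) (auto simp: Ud)
    finally show ?thesis .
  qed
  have dV: "distr M P Vv = Q"
  proof -
    have "distr M P Vv = PiM I (\<lambda>i. distr M borel (V i))"
      unfolding P_def Vv_def using indep_vars_iff_distr_eq_PiM'[OF ne, where M'="\<lambda>_. borel" and X=V] indV Vm by auto
    also have "\<dots> = Q" unfolding Q_def by (rule PiM_cong) (auto simp: Vd)
    finally show ?thesis .
  qed
  define V' where "V' j = (\<lambda>x. if j \<in> S then 1 - x else x) \<circ> V j" for j
  have V'm: "V' j \<in> borel_measurable M" if "j \<in> I" for j
    unfolding V'_def using Vm[OF that] by (cases "j \<in> S") auto
  have indV': "indep_vars (\<lambda>_. borel) V' I"
    unfolding V'_def by (rule indep_vars_compose[OF indV]) auto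
  have V'd: "distr M borel (V' j) = uniform_measure lborel {0..1}" if "j \<in> I" for j
  proof -
    have "distr M borel (V' j) = distr (distr M borel (V j)) borel (\<lambda>x. if j \<in> S then 1 - x else x)"
      unfolding V'_def by (rule distr_distr[symmetric]) (use Vm[OF that] in auto)
    also have "\<dots> = uniform_measure lborel {0..1}"
    proof (cases "j \<in> S")
      case True then show ?thesis using Vd[OF that] uniform_flip by simp
    next
      case False then show ?thesis using Vd[OF that] by (simp add: distr_id2)
    qed
    finally show ?thesis .
  qed
  define R where "R = (\<lambda>v. \<lambda>j\<in>I. if j \<in> S then 1 - v j else (v j::real))"
  have mR: "R \<in> measurable P P" unfolding R_def P_def by measurable
  have dR: "distr Q P R = Q"
  proof -
    have "distr Q P R = distr (distr M P Vv) P R" by (simp add: dV)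
    also have "\<dots> = distr M P (R \<circ> Vv)" by (rule distr_distr) (use mR mVv in auto)
    also have "R \<circ> Vv = (\<lambda>\<omega>. \<lambda>j\<in>I. V' j \<omega>)"
      by (auto simp: R_def Vv_def V'_def fun_eq_iff)
    also have "distr M P \<dots> = PiM I (\<lambda>i. distr M borel (V' i))"
      unfolding P_def using indep_vars_iff_distr_eq_PiM'[OF ne, where M'="\<lambda>_. borel" and X=V'] indV' V'm by auto
    also have "\<dots> = Q" unfolding Q_def by (rule PiM_cong) (auto simp: V'd)
    finally show ?thesis .
  qed
  have probQ: "prob_space Q" using dV mVv by (metis prob_space_distr)
  define PX where "PX = distr M P Xv"
  have probPX: "prob_space PX" unfolding PX_def using mXv by (rule prob_space_distr)
  have setsPX: "sets PX = sets P" unfolding PX_def by simp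
  define T where "T j = distr_transform (distr M borel (X j))" for j
  define T' where "T' j = distr_transform (distr M borel (\<lambda>\<omega>. g j (X j \<omega>)))" for j
  define H where "H = (\<lambda>p. \<lambda>j\<in>I. T j (fst p j) (snd p j))"
  define H' where "H' = (\<lambda>p. \<lambda>j\<in>I. T' j (fst p j) (snd p j))"
  have fmX: "finite_measure (distr M borel (X j))" if "j \<in> I" for j
    using prob_space_distr[OF Xm'[OF that]] by (auto simp: prob_space_def)
  have fmGX: "finite_measure (distr M borel (\<lambda>\<omega>. g j (X j \<omega>)))" if "j \<in> I" for j
  proof -
    have "(\<lambda>\<omega>. g j (X j \<omega>)) \<in> borel_measurable M" using Xm'[OF that] gm[OF that] by measurable
    then show ?thesis using prob_space_distr by (auto simp: prob_space_def)
  qed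
  have mH: "H \<in> measurable (P \<Otimes>\<^sub>M P) P" unfolding H_def
    unfolding P_def
  proof (rule measurable_restrict)
    fix j assume j: "j \<in> I"
    have 1: "(\<lambda>p. fst p j) \<in> borel_measurable (joint_space I \<Otimes>\<^sub>M joint_space I)" using j by measurable
    have 2: "(\<lambda>p. snd p j) \<in> borel_measurable (joint_space I \<Otimes>\<^sub>M joint_space I)" using j by measurable
    show "(\<lambda>p. T j (fst p j) (snd p j)) \<in> borel_measurable (joint_space I \<Otimes>\<^sub>M joint_space I)"
      unfolding T_def by (rule dt_measurable[OF fmX[OF j] _ 1 2]) simp
  qed
  have mH': "H' \<in> measurable (P \<Otimes>\<^sub>M P) P" unfolding H'_def
    unfolding P_def
  proof (rule measurable_restrict)
    fix j assume j: "j \<in> I"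
    have 1: "(\<lambda>p. fst p j) \<in> borel_measurable (joint_space I \<Otimes>\<^sub>M joint_space I)" using j by measurable
    have 2: "(\<lambda>p. snd p j) \<in> borel_measurable (joint_space I \<Otimes>\<^sub>M joint_space I)" using j by measurable
    show "(\<lambda>p. T' j (fst p j) (snd p j)) \<in> borel_measurable (joint_space I \<Otimes>\<^sub>M joint_space I)"
      unfolding T'_def by (rule dt_measurable[OF fmGX[OF j] _ 1 2]) simp
  qed
  have setsPQ: "sets (PX \<Otimes>\<^sub>M Q) = sets (P \<Otimes>\<^sub>M P)"
    by (rule sets_pair_measure_cong[OF setsPX setsQ])
  have measPQ: "\<And>N. measurable (PX \<Otimes>\<^sub>M Q) N = measurable (P \<Otimes>\<^sub>M P) N"
    by (rule measurable_cong_sets[OF setsPQ refl])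
  have mXU: "(\<lambda>\<omega>. (Xv \<omega>, Uv \<omega>)) \<in> measurable M (P \<Otimes>\<^sub>M P)" using mXv mUv by measurable
  have mGV: "(\<lambda>\<omega>. (GXv \<omega>, Vv \<omega>)) \<in> measurable M (P \<Otimes>\<^sub>M P)" using mGXv mVv by measurable
  have jXU: "distr M (P \<Otimes>\<^sub>M P) (\<lambda>\<omega>. (Xv \<omega>, Uv \<omega>)) = PX \<Otimes>\<^sub>M Q"
    using indXU unfolding indep_var_distribution_eq PX_def dU[symmetric] P_def Xv_def Uv_def by simp
  have jGV: "distr M (P \<Otimes>\<^sub>M P) (\<lambda>\<omega>. (GXv \<omega>, Vv \<omega>)) = distr M P GXv \<Otimes>\<^sub>M Q"
    using indGV unfolding indep_var_distribution_eq dV[symmetric] P_def GXv_def Vv_def by simp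
  have LHS: "dcop d M I X U = d (distr (PX \<Otimes>\<^sub>M Q) P H)"
  proof -
    have "(\<lambda>\<omega>. \<lambda>j\<in>I. distr_transform (distr M borel (X j)) (X j \<omega>) (U j \<omega>)) = H \<circ> (\<lambda>\<omega>. (Xv \<omega>, Uv \<omega>))"
      by (auto simp: H_def T_def Xv_def Uv_def fun_eq_iff)
    then have "dcop d M I X U = d (distr M P (H \<circ> (\<lambda>\<omega>. (Xv \<omega>, Uv \<omega>))))"
      unfolding dcop_def P_def by simp
    also have "distr M P (H \<circ> (\<lambda>\<omega>. (Xv \<omega>, Uv \<omega>))) = distr (distr M (P \<Otimes>\<^sub>M P) (\<lambda>\<omega>. (Xv \<omega>, Uv \<omega>))) P H"
      by (rule distr_distr[symmetric, OF mH mXU])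
    finally show ?thesis unfolding jXU .
  qed
  define Gm where "Gm = (\<lambda>x. \<lambda>j\<in>I. g j (x j))"
  have mGm: "Gm \<in> measurable P P" unfolding Gm_def P_def
    by (rule measurable_restrict) (use gm in measurable)
  have dGX: "distr M P GXv = distr PX P Gm"
  proof -
    have "GXv = Gm \<circ> Xv" by (auto simp: Gm_def GXv_def Xv_def fun_eq_iff)
    then show ?thesis unfolding PX_def using distr_distr[OF mGm mXv] by simp
  qed
  define GR where "GR = (\<lambda>(x, y). (Gm x, R y))"
  have jGV2: "distr M P GXv \<Otimes>\<^sub>M Q = distr (PX \<Otimes>\<^sub>M Q) (P \<Otimes>\<^sub>M P) GR"
  proof -
    have "distr M P GXv \<Otimes>\<^sub>M Q = distr PX P Gm \<Otimes>\<^sub>M distr Q P R" by (simp add: dGX dR)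
    also have "\<dots> = distr (PX \<Otimes>\<^sub>M Q) (P \<Otimes>\<^sub>M P) GR" unfolding GR_def
      by (rule pair_measure_distr)
        (use mGm mR setsPX setsQ probQ dR in \<open>auto simp: measurable_cong_sets[OF setsPX refl] measurable_cong_sets[OF setsQ refl] prob_space_imp_sigma_finite\<close>)
    finally show ?thesis .
  qed
  have mGR: "GR \<in> measurable (P \<Otimes>\<^sub>M P) (P \<Otimes>\<^sub>M P)" unfolding GR_def using mGm mR by measurable
  define Fl where "Fl = (\<lambda>x. \<lambda>j\<in>I. if j \<in> S then - x j else (x j::real))"
  define a where "a = (\<lambda>j. if j \<in> S then 1 else (0::real))"
  define Tr where "Tr = (\<lambda>x. \<lambda>j\<in>I. x j + a j)"
  have mFl: "Fl \<in> measurable P P" unfolding Fl_def P_def by measurable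
  have mTr: "Tr \<in> measurable P P" unfolding Tr_def P_def by measurable
  have pw: "H' \<circ> GR = Tr \<circ> (Fl \<circ> H)"
  proof (rule ext)
    fix p :: "((nat \<times> nat) \<Rightarrow> real) \<times> ((nat \<times> nat) \<Rightarrow> real)"
    obtain x y where p: "p = (x, y)" by (cases p)
    have "T' j (g j (x j)) (if j \<in> S then 1 - y j else y j) = (if j \<in> S then - T j (x j) (y j) else T j (x j) (y j)) + a j"
      if j: "j \<in> I" for j
    proof (cases "j \<in> S")
      case True
      show ?thesis using True unfolding T'_def T_def a_def
        by (subst dt_dec[OF PS Xm'[OF j] gm[OF j] S_dec[OF True]]) simp
    next
      case False
      show ?thesis using False unfolding T'_def T_def a_def
        by (subst dt_inc[OF PS Xm'[OF j] gm[OF j] S_inc[OF j False]]) simp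
    qed
    then show "(H' \<circ> GR) p = (Tr \<circ> (Fl \<circ> H)) p"
      by (auto simp: p H'_def GR_def Gm_def R_def Tr_def Fl_def H_def fun_eq_iff)
  qed
  define L where "L = distr (PX \<Otimes>\<^sub>M Q) P H"
  have probL: "prob_space L" unfolding L_def
    by (rule prob_space.prob_space_distr) (use probPX probQ mH measPQ in \<open>auto intro: prob_space_pair\<close>)
  have RHS: "dcop d M I (\<lambda>j \<omega>. g j (X j \<omega>)) V = d (distr (distr L P Fl) P Tr)"
  proof -
    have "(\<lambda>\<omega>. \<lambda>j\<in>I. distr_transform (distr M borel (\<lambda>\<omega>. g j (X j \<omega>))) (g j (X j \<omega>)) (V j \<omega>)) = H' \<circ> (\<lambda>\<omega>. (GXv \<omega>, Vv \<omega>))"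
      by (auto simp: H'_def T'_def GXv_def Vv_def fun_eq_iff)
    then have "dcop d M I (\<lambda>j \<omega>. g j (X j \<omega>)) V = d (distr M P (H' \<circ> (\<lambda>\<omega>. (GXv \<omega>, Vv \<omega>))))"
      unfolding dcop_def P_def by simp
    also have "distr M P (H' \<circ> (\<lambda>\<omega>. (GXv \<omega>, Vv \<omega>))) = distr (distr M (P \<Otimes>\<^sub>M P) (\<lambda>\<omega>. (GXv \<omega>, Vv \<omega>))) P H'"
      by (rule distr_distr[symmetric, OF mH' mGV])
    also have "\<dots> = distr (distr (PX \<Otimes>\<^sub>M Q) (P \<Otimes>\<^sub>M P) GR) P H'" unfolding jGV jGV2 ..
    also have "\<dots> = distr (PX \<Otimes>\<^sub>M Q) P (H' \<circ> GR)"
      by (rule distr_distr) (use mH' mGR measPQ in auto)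
    also have "\<dots> = distr (PX \<Otimes>\<^sub>M Q) P (Tr \<circ> (Fl \<circ> H))" unfolding pw ..
    also have "\<dots> = distr (distr (PX \<Otimes>\<^sub>M Q) P (Fl \<circ> H)) P Tr"
    proof (rule distr_distr[symmetric])
      show "Tr \<in> measurable P P" by (rule mTr)
      show "Fl \<circ> H \<in> measurable (PX \<Otimes>\<^sub>M Q) P"
        unfolding measPQ by (rule measurable_comp[OF mH mFl])
    qed
    also have "distr (PX \<Otimes>\<^sub>M Q) P (Fl \<circ> H) = distr L P Fl"
      unfolding L_def by (rule distr_distr[symmetric]) (use mFl mH measPQ in auto)
    finally show ?thesis .
  qed
  have mFlL: "Fl \<in> measurable L P" unfolding L_def using mFl by simp
  have jl1: "is_joint_law I (distr L P Fl)"
    unfolding is_joint_law_def using prob_space.prob_space_distr[OF probL mFlL] unfolding P_def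
    by auto
  have jl2: "is_joint_law I L"
    unfolding is_joint_law_def L_def P_def using probL unfolding L_def P_def by auto
  have "d (distr (distr L P Fl) P Tr) = d (distr L P Fl)"
    using TI jl1 unfolding translation_invariant_def Tr_def P_def by blast
  also have "\<dots> = d L"
    unfolding Fl_def P_def by (rule flip_inv[OF finS SI ES jl2])
  finally show ?thesis unfolding LHS RHS L_def by simp
qed
theorem mainTheorem2:
  fixes n :: nat and ds :: "nat \<Rightarrow> nat"
    and d :: "((nat \<times> nat) \<Rightarrow> real) measure \<Rightarrow> real"
    and M :: "'a measure"
    and X U V :: "(nat \<times> nat) \<Rightarrow> 'a \<Rightarrow> real"
    and g :: "(nat \<times> nat) \<Rightarrow> real \<Rightarrow> real"
  assumes "n \<ge> 2"
    and "translation_invariant d (idx n ds)"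
    and "elementwise_symmetric d (idx n ds)"
    and "prob_space M"
    and "\<forall>j\<in>idx n ds. X j \<in> borel_measurable M"
    and "indep_uniforms M (idx n ds) X U"
    and "indep_uniforms M (idx n ds) (\<lambda>j \<omega>. g j (X j \<omega>)) V"
    and "\<forall>j\<in>idx n ds. (\<forall>x y. x < y \<longrightarrow> g j x < g j y) \<or> (\<forall>x y. x < y \<longrightarrow> g j x > g j y)"
  shows "dcop d M (idx n ds) X U = dcop d M (idx n ds) (\<lambda>j \<omega>. g j (X j \<omega>)) V"
proof (cases "idx n ds = {}")
  case True
  then show ?thesis unfolding dcop_def by (simp add: restrict_def)
next
  case False
  have "idx n ds = Sigma {..<n} (\<lambda>i. {..<ds i})" by (auto simp: idx_def)
  then have "finite (idx n ds)" by simp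
  then show ?thesis using main_aux[OF _ False] assms by blast
qed

end
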